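(* Let $\frac{4}{3}<p\le 1.73$ and $0\le\alpha\le\frac{\pi}{3}$. The function $R(\rho)=\sin^p\rho+\sin^p(\alpha-\rho)$ on $0\le\rho\le\frac{\alpha}{2}$ attains its minimum at one of the endpoints $\rho=0$ or $\rho=\frac{\alpha}{2}$. *)

theory Defs
  imports "HOL-Analysis.Analysis"
begin

end

theory Submission imports Defs begin

lemma sc3: "sin x * cos x ^ 3 = (2 * sin (2 * x) + sin (4 * x)) / 8" for x :: real
proof -
  have "sin (4 * x) = 2 * sin (2 * x) * cos (2 * x)" using sin_double[of "2 * x"] by simp
  hence s4: "sin (4 * x) = 4 * sin x * cos x * (2 * cos x ^ 2 - 1)"
    by (simp add: sin_double cos_double_cos)
  have s2: "sin (2 * x) = 2 * sin x * cos x" by (rule sin_double)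
  show ?thesis unfolding s4 s2 by (simp add: algebra_simps power2_eq_square power3_eq_cube)
qed

lemma trig_id:
  fixes a b :: real
  shows "sin b * cos b ^ 3 - sin a * cos a ^ 3 =
     sin (b - a) * (cos (a+b) + cos (2 * (a+b)) * cos (b - a)) / 2"
proof -
  have h2: "sin (2 * b) - sin (2 * a) = 2 * sin (b - a) * cos (a + b)"
  proof -
    have e1: "(2 * b - 2 * a) / 2 = b - a" "(2 * b + 2 * a) / 2 = a + b" by simp_all
    show ?thesis using sin_diff_sin[of "2 * b" "2 * a"] unfolding e1 by simp
  qed
  have "sin (4 * b) - sin (4 * a) = 2 * sin (2 * (b - a)) * cos (2 * (a + b))"
  proof -
    have e1: "(4 * b - 4 * a) / 2 = 2 * (b - a)" "(4 * b + 4 * a) / 2 = 2 * (a + b)" by simp_all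
    show ?thesis using sin_diff_sin[of "4 * b" "4 * a"] unfolding e1 by simp
  qed
  moreover have "sin (2 * (b - a)) = 2 * sin (b - a) * cos (b - a)" by (rule sin_double)
  ultimately have h3: "sin (4 * b) - sin (4 * a) = 4 * sin (b - a) * cos (b - a) * cos (2 * (a + b))"
    by simp
  show ?thesis unfolding sc3 using h2 h3 by (simp add: algebra_simps)
qed

lemma key_trig:
  fixes a b :: real
  assumes "0 \<le> a" "a \<le> b" "a + b \<le> pi/3"
  shows "sin a * cos a ^ 3 \<le> sin b * cos b ^ 3"
proof -
  define s d where "s = a + b" and "d = b - a"
  have s0: "0 \<le> s" "s \<le> pi/3" and d0: "0 \<le> d" "d \<le> s" using assms by (auto simp: s_def d_def)
  have sd: "sin d \<ge> 0" using d0 s0 by (intro sin_ge_zero) auto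
  have cd: "0 \<le> cos d" "cos d \<le> 1" using d0 s0 by (auto intro!: cos_ge_zero)
  have cs: "cos s \<ge> 1/2"
  proof -
    have "cos (pi/3) \<le> cos s" using s0 by (intro cos_monotone_0_pi_le) auto
    thus ?thesis by (simp add: cos_60)
  qed
  have c2: "cos (2 * s) = 2 * cos s ^ 2 - 1" by (simp add: cos_double_cos)
  have "cos s + cos (2 * s) * cos d \<ge> 0"
  proof (cases "cos (2 * s) \<ge> 0")
    case True
    hence "cos (2 * s) * cos d \<ge> 0" using cd by simp
    thus ?thesis using cs by linarith
  next
    case False
    hence "cos (2 * s) * cos d \<ge> cos (2 * s) * 1" using cd by (intro mult_left_mono_neg) auto
    moreover have "(2 * cos s - 1) * (cos s + 1) \<ge> 0" using cs by (intro mult_nonneg_nonneg) auto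
    hence "cos s + cos (2 * s) \<ge> 0" using c2 by (simp add: algebra_simps power2_eq_square)
    ultimately show ?thesis by linarith
  qed
  hence "sin d * (cos s + cos (2 * s) * cos d) / 2 \<ge> 0" using sd by simp
  thus ?thesis using trig_id[of b a] unfolding s_def d_def by linarith
qed
lemma pw_ineq:
  fixes a b r :: real
  assumes "1/3 \<le> r" "0 < a" "a \<le> b" "a + b \<le> pi/3"
  shows "sin a powr r * cos a \<le> sin b powr r * cos b"
proof -
  have api: "b < pi/2" using assms pi_gt3 by linarith
  have sa: "sin a > 0" using assms api by (intro sin_gt_zero) auto
  have sab: "sin a \<le> sin b" using assms api by (intro sin_monotone_2pi_le) auto
  have ca: "cos a > 0" and cb: "cos b > 0" using assms api by (auto intro!: cos_gt_zero_pi)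
  define x where "x = sin a / sin b"
  have x0: "0 < x" "x \<le> 1" using sa sab by (auto simp: x_def)
  have k: "sin a * cos a ^ 3 \<le> sin b * cos b ^ 3" using key_trig[of a b] assms by auto
  have "x \<le> (cos b / cos a) ^ 3"
    using k sa sab ca by (simp add: x_def power_divide divide_simps mult.commute)
  also have "x = (x powr (1/3)) ^ 3" using x0
    by (simp add: powr_realpow[symmetric] powr_powr)
  finally have x3: "(x powr (1/3)) ^ 3 \<le> (cos b / cos a) ^ 3" .
  have x13: "x powr (1/3) \<le> cos b / cos a"
    using x3 x0 cb ca by (subst (asm) power_mono_iff) auto
  have xr: "x powr r \<le> x powr (1/3)" using x0 assms by (intro powr_mono') auto
  have sar: "sin a powr r = x powr r * sin b powr r"
    using sa sab by (simp add: x_def powr_divide)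
  have "sin a powr r * cos a = x powr r * cos a * sin b powr r" by (simp add: sar)
  also have "\<dots> \<le> (cos b / cos a) * cos a * sin b powr r"
    using xr x13 ca by (intro mult_right_mono) auto
  also have "\<dots> = sin b powr r * cos b" using ca by simp
  finally show ?thesis .
qed

theorem lemma2p8:
  fixes p \<alpha> :: real
  assumes "4/3 < p" and "p \<le> 1.73"
    and "0 \<le> \<alpha>" and "\<alpha> \<le> pi/3"
  defines "R \<equiv> (\<lambda>\<rho>::real. sin \<rho> powr p + sin (\<alpha> - \<rho>) powr p)"
  shows "\<exists>e \<in> {0, \<alpha>/2}. \<forall>\<rho> \<in> {0..\<alpha>/2}. R e \<le> R \<rho>"
proof -
  have main: "R (\<alpha>/2) \<le> R \<rho>" if rho: "\<rho> \<in> {0..\<alpha>/2}" for \<rho>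
  proof -
    have cont: "continuous_on {\<rho>..\<alpha>/2} R"
      unfolding R_def using assms(1,3,4) rho pi_gt3
      by (intro continuous_on_add continuous_on_powr' continuous_intros) (auto intro!: sin_ge_zero)
    show ?thesis
    proof (rule DERIV_nonpos_imp_decreasing_open[OF _ _ cont])
      show "\<rho> \<le> \<alpha>/2" using rho by auto
    next
      fix x assume x: "\<rho> < x" "x < \<alpha>/2"
      have x0: "0 < x" using x rho by auto
      have sx: "sin x > 0" using x0 x assms pi_gt3 by (intro sin_gt_zero) auto
      have sx2: "sin (\<alpha> - x) > 0" using x0 x assms pi_gt3 by (intro sin_gt_zero) auto
      have d1: "DERIV (\<lambda>x. sin x powr p) x :> p * sin x powr (p - of_nat 1) * cos x"
        by (rule DERIV_fun_powr[OF DERIV_sin sx])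
      have d2: "DERIV (\<lambda>x. sin (\<alpha> - x) powr p) x :> p * sin (\<alpha> - x) powr (p - of_nat 1) * (- cos (\<alpha> - x))"
        by (rule DERIV_fun_powr[where g="\<lambda>x. sin (\<alpha> - x)", OF _ sx2]) (auto intro!: derivative_eq_intros)
      have "DERIV R x :> p * sin x powr (p - of_nat 1) * cos x + p * sin (\<alpha> - x) powr (p - of_nat 1) * (- cos (\<alpha> - x))"
        unfolding R_def by (rule DERIV_add[OF d1 d2])
      moreover have "sin x powr (p - 1) * cos x \<le> sin (\<alpha> - x) powr (p - 1) * cos (\<alpha> - x)"
        using assms x x0 by (intro pw_ineq) auto
      hence "p * sin x powr (p - of_nat 1) * cos x + p * sin (\<alpha> - x) powr (p - of_nat 1) * (- cos (\<alpha> - x)) \<le> 0"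
        using assms(1) by (simp add: mult.assoc[symmetric] mult_left_mono)
      ultimately show "\<exists>y. DERIV R x :> y \<and> y \<le> 0" by blast
    qed
  qed
  thus ?thesis by auto
qed
end
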